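(* For every integer $t \ge 2$, if $G$ is a connected chordal graph with no induced subgraph isomorphic to $K_t \bowtie \overline{K_t}$, then $\mathsf{lpt}(G) \le t-1$.
   Context: All graphs are finite and simple. A graph is chordal if it has no induced cycle of length at least four. For $n\in\mathbb{N}$, $K_n \bowtie \overline{K_n}$ denotes the graph on vertices $v_1^1,\dots,v_n^1,v_1^2,\dots,v_n^2$ in which $\{v_1^1,\dots,v_n^1\}$ is a clique, $\{v_1^2,\dots,v_n^2\}$ is an independent set, and $v_i^1$ is adjacent to $v_j^2$ if and only if $i=j$ (a clique and an independent set of size $n$ joined by a perfect matching). A longest path of a connected graph $G$ is a path of maximum length in $G$; a longest path transversal is a set of vertices meeting every longest path; $\mathsf{lpt}(G)$ is the minimum cardinality of a longest path transversal of $G$. *)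

theory Defs
  imports Main
begin

definition graph :: "'a set \<Rightarrow> ('a \<Rightarrow> 'a \<Rightarrow> bool) \<Rightarrow> bool" where
  "graph V E \<longleftrightarrow> finite V \<and> (\<forall>u v. E u v \<longrightarrow> u \<in> V \<and> v \<in> V)
     \<and> (\<forall>u v. E u v \<longrightarrow> E v u) \<and> (\<forall>v. \<not> E v v)"

definition is_path :: "'a set \<Rightarrow> ('a \<Rightarrow> 'a \<Rightarrow> bool) \<Rightarrow> 'a list \<Rightarrow> bool" where
  "is_path V E p \<longleftrightarrow> p \<noteq> [] \<and> distinct p \<and> set p \<subseteq> V
     \<and> (\<forall>i. Suc i < length p \<longrightarrow> E (p ! i) (p ! Suc i))"

definition path_length :: "'a list \<Rightarrow> nat" where
  "path_length p = length p - 1"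

definition connected_graph :: "'a set \<Rightarrow> ('a \<Rightarrow> 'a \<Rightarrow> bool) \<Rightarrow> bool" where
  "connected_graph V E \<longleftrightarrow> V \<noteq> {} \<and>
     (\<forall>u\<in>V. \<forall>v\<in>V. \<exists>p. is_path V E p \<and> hd p = u \<and> last p = v)"

text \<open>Chordal: no induced cycle of length at least four.\<close>
definition chordal :: "'a set \<Rightarrow> ('a \<Rightarrow> 'a \<Rightarrow> bool) \<Rightarrow> bool" where
  "chordal V E \<longleftrightarrow> \<not> (\<exists>c. length c \<ge> 4 \<and> distinct c \<and> set c \<subseteq> V \<and>
     (\<forall>i<length c. \<forall>j<length c.
        E (c ! i) (c ! j) \<longleftrightarrow> (j = Suc i mod length c \<or> i = Suc j mod length c)))"

definition longest_path :: "'a set \<Rightarrow> ('a \<Rightarrow> 'a \<Rightarrow> bool) \<Rightarrow> 'a list \<Rightarrow> bool" where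
  "longest_path V E p \<longleftrightarrow> is_path V E p \<and>
     (\<forall>q. is_path V E q \<longrightarrow> path_length q \<le> path_length p)"

definition lp_transversal :: "'a set \<Rightarrow> ('a \<Rightarrow> 'a \<Rightarrow> bool) \<Rightarrow> 'a set \<Rightarrow> bool" where
  "lp_transversal V E S \<longleftrightarrow> S \<subseteq> V \<and> (\<forall>p. longest_path V E p \<longrightarrow> set p \<inter> S \<noteq> {})"

definition lpt :: "'a set \<Rightarrow> ('a \<Rightarrow> 'a \<Rightarrow> bool) \<Rightarrow> nat" where
  "lpt V E = (LEAST k. \<exists>S. lp_transversal V E S \<and> card S = k)"

text \<open>G has an induced subgraph isomorphic to K_t joined to co-K_t by a perfect
  matching: clique vertices a 0..a (t-1), independent vertices b 0..b (t-1),
  all distinct, a i adjacent to b j iff i = j.\<close>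
definition has_induced_KtKt :: "'a set \<Rightarrow> ('a \<Rightarrow> 'a \<Rightarrow> bool) \<Rightarrow> nat \<Rightarrow> bool" where
  "has_induced_KtKt V E t \<longleftrightarrow> (\<exists>a b.
     inj_on a {..<t} \<and> inj_on b {..<t} \<and> a ` {..<t} \<inter> b ` {..<t} = {}
     \<and> a ` {..<t} \<subseteq> V \<and> b ` {..<t} \<subseteq> V
     \<and> (\<forall>i<t. \<forall>j<t. (E (a i) (a j) \<longleftrightarrow> i \<noteq> j) \<and> \<not> E (b i) (b j)
                     \<and> (E (a i) (b j) \<longleftrightarrow> i = j)))"

end

theory Submission
  imports Defs
begin

lemma cyc_iff:
  assumes "i < (n::nat)" "j < n"
  shows "(j = Suc i mod n \<or> i = Suc j mod n) \<longleftrightarrow>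
     (j = Suc i \<or> i = Suc j \<or> (i = 0 \<and> j = n - 1) \<or> (j = 0 \<and> i = n - 1))"
  using assms by (auto simp: mod_if)

lemma cycle_from_paths:
  fixes p q :: "'a list" and E :: "'a \<Rightarrow> 'a \<Rightarrow> bool"
  assumes sym: "\<forall>u v. E u v \<longrightarrow> E v u"
    and dp: "distinct p" and dq: "distinct q"
    and ip: "\<forall>i<length p. \<forall>j<length p. E (p!i) (p!j) \<longleftrightarrow> (j = Suc i \<or> i = Suc j)"
    and iq: "\<forall>i<length q. \<forall>j<length q. E (q!i) (q!j) \<longleftrightarrow> (j = Suc i \<or> i = Suc j)"
    and h0: "p!0 = q!0"
    and hl: "p!(length p - 1) = q!(length q - 1)"
    and lp: "length p \<ge> 3" and lq: "length q \<ge> 3"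
    and disj: "\<forall>i j. 0<i \<longrightarrow> i<length p - 1 \<longrightarrow> 0<j \<longrightarrow> j< length q - 1 \<longrightarrow> p!i \<noteq> q!j \<and> \<not> E (p!i) (q!j)"
  shows "\<exists>c. length c \<ge> 4 \<and> distinct c \<and> set c \<subseteq> set p \<union> set q \<and>
     (\<forall>i<length c. \<forall>j<length c. E (c!i) (c!j) \<longleftrightarrow> (j = Suc i mod length c \<or> i = Suc j mod length c))"
proof -
  define k where "k = length p"
  define m where "m = length q"
  define n where "n = k + m - 2"
  define g where "g i = (if i < k then p!i else q!(n-i))" for i
  define c where "c = map g [0..<n]"
  have lc: "length c = n" by (simp add: c_def)
  have cn: "\<And>i. i < n \<Longrightarrow> c!i = g i" by (simp add: c_def)
  have n4: "n \<ge> 4" using lp lq by (simp add: n_def k_def m_def)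
  have gq: "\<And>i. k \<le> i \<Longrightarrow> i < n \<Longrightarrow> g i = q!(n-i) \<and> 0 < n - i \<and> n - i < m - 1"
    using lp lq by (auto simp: g_def n_def k_def m_def)
  have gp: "\<And>i. i < k \<Longrightarrow> g i = p!i" by (simp add: g_def)
  have p0: "g 0 = q!0" using h0 lp by (auto simp: g_def k_def)
  have pl: "g (k-1) = q!(m-1)" using hl lp by (auto simp: g_def k_def m_def)
  have inj: "inj_on g {0..<n}"
  proof (rule inj_onI)
    fix i j assume i: "i \<in> {0..<n}" and j: "j \<in> {0..<n}" and e: "g i = g j"
    show "i = j"
    proof (cases "i < k")
      case True note ik = True
      show ?thesis
      proof (cases "j < k")
        case True
        then show ?thesis using ik e dp gp by (simp add: k_def nth_eq_iff_index_eq)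
      next
        case False
        then have jq: "g j = q!(n-j)" "0 < n - j" "n - j < m - 1" using gq j by auto
        have "False"
        proof (cases "i = 0")
          case True
          then have "q!0 = q!(n-j)" using p0 e jq by simp
          then have "0 = n - j" using nth_eq_iff_index_eq[OF dq, of 0 "n-j"] jq lq by (force simp: m_def)
          then show False using jq by simp
        next
          case False
          show False
          proof (cases "i = k - 1")
            case True
            then have "q!(m-1) = q!(n-j)" using pl e jq by simp
            then have "m-1 = n - j" using nth_eq_iff_index_eq[OF dq, of "m-1" "n-j"] jq lq by (force simp: m_def)
            then show False using jq by simp
          next
            case False2: False
            have ik1: "i < length p - 1" using ik False2 by (simp add: k_def)
            have "p!i \<noteq> q!(n-j)" using disj[rule_format, of i "n-j"] False ik1 jq by (simp add: m_def)
            then show False using e jq gp ik by simp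
          qed
        qed
        then show ?thesis ..
      qed
    next
      case False note ik = False
      then have iq': "g i = q!(n-i)" "0 < n - i" "n - i < m - 1" using gq i by auto
      show ?thesis
      proof (cases "j < k")
        case False
        then have jq: "g j = q!(n-j)" "0 < n - j" "n - j < m - 1" using gq j by auto
        then have "q!(n-i) = q!(n-j)" using iq' e by simp
        then have "n - i = n - j" using nth_eq_iff_index_eq[OF dq, of "n-i" "n-j"] iq' jq by (force simp: m_def)
        then show ?thesis using i j ik False by auto
      next
        case True note jk = True
        have "False"
        proof (cases "j = 0")
          case True
          then have "q!0 = q!(n-i)" using p0 e iq' by simp
          then have "0 = n - i" using nth_eq_iff_index_eq[OF dq, of 0 "n-i"] iq' lq by (force simp: m_def)
          then show False using iq' by simp
        next
          case False
          show False
          proof (cases "j = k - 1")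
            case True
            then have "q!(m-1) = q!(n-i)" using pl e iq' by simp
            then have "m-1 = n - i" using nth_eq_iff_index_eq[OF dq, of "m-1" "n-i"] iq' lq by (force simp: m_def)
            then show False using iq' by simp
          next
            case False2: False
            have jk1: "j < length p - 1" using jk False2 by (simp add: k_def)
            have "p!j \<noteq> q!(n-i)" using disj[rule_format, of j "n-i"] False jk1 iq' by (simp add: m_def)
            then show False using e iq' gp jk by simp
          qed
        qed
        then show ?thesis ..
      qed
    qed
  qed
  have Q: "\<And>a b. a < m \<Longrightarrow> b < m \<Longrightarrow> E (q!a) (q!b) \<longleftrightarrow> (b = Suc a \<or> a = Suc b)"
    using iq by (simp add: m_def)
  have P: "\<And>a b. a < k \<Longrightarrow> b < k \<Longrightarrow> E (p!a) (p!b) \<longleftrightarrow> (b = Suc a \<or> a = Suc b)"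
    using ip by (simp add: k_def)
  have m3: "m \<ge> 3" "k \<ge> 3" using lp lq by (auto simp: m_def k_def)
  have nkm: "n = k + m - 2" by (simp add: n_def)
  have key: "E (g i) (g j) \<longleftrightarrow> (j = Suc i mod n \<or> i = Suc j mod n)"
    if i: "i < k" and j: "k \<le> j" "j < n" for i j
  proof -
    have jq: "g j = q!(n-j)" "0 < n - j" "n - j < m - 1" using gq[OF j(1) j(2)] by auto
    have cy: "(j = Suc i mod n \<or> i = Suc j mod n) \<longleftrightarrow> (j = Suc i \<or> (i = 0 \<and> j = n - 1))"
      using cyc_iff[of i n j] i j by auto
    show ?thesis
    proof (cases "i = 0")
      case True
      then have "E (g i) (g j) \<longleftrightarrow> n - j = 1" using p0 jq Q[of 0 "n-j"] m3 by simp
      also have "\<dots> \<longleftrightarrow> (j = Suc i \<or> (i = 0 \<and> j = n - 1))" using True j i m3 nkm by auto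
      finally show ?thesis using cy by simp
    next
      case False
      show ?thesis
      proof (cases "i = k - 1")
        case True
        then have "E (g i) (g j) \<longleftrightarrow> n - j = m - 2" using pl jq Q[of "m-1" "n-j"] m3 by auto
        also have "\<dots> \<longleftrightarrow> (j = Suc i \<or> (i = 0 \<and> j = n - 1))" using True False j i m3 nkm by auto
        finally show ?thesis using cy by simp
      next
        case False2: False
        have ik1: "i < length p - 1" using i False2 by (simp add: k_def)
        have "\<not> E (p!i) (q!(n-j))" using disj[rule_format, of i "n-j"] False ik1 jq by (simp add: m_def)
        then have "\<not> E (g i) (g j)" using jq gp i by simp
        moreover have "\<not> (j = Suc i \<or> (i = 0 \<and> j = n - 1))" using False False2 i j by auto
        ultimately show ?thesis using cy by blast
      qed
    qed
  qed
  have adj: "E (g i) (g j) \<longleftrightarrow> (j = Suc i mod n \<or> i = Suc j mod n)" if ij: "i < n" "j < n" for i j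
  proof (cases "i < k")
    case True note ik = True
    show ?thesis
    proof (cases "j < k")
      case True
      have "(j = Suc i mod n \<or> i = Suc j mod n) \<longleftrightarrow> (j = Suc i \<or> i = Suc j)"
        using cyc_iff[of i n j] ij ik True m3 nkm by auto
      then show ?thesis using ik True P[of i j] gp by simp
    next
      case False then show ?thesis using key ik that by auto
    qed
  next
    case False note ik = False
    show ?thesis
    proof (cases "j < k")
      case True
      then show ?thesis using key[of j i] ik that sym by auto
    next
      case False
      have iq': "g i = q!(n-i)" "0 < n - i" "n - i < m - 1" using gq[of i] ik that by auto
      have jq: "g j = q!(n-j)" "0 < n - j" "n - j < m - 1" using gq[of j] False that by auto
      have "E (g i) (g j) \<longleftrightarrow> (n - j = Suc (n - i) \<or> n - i = Suc (n - j))" using iq' jq Q[of "n-i" "n-j"] by simp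
      also have "\<dots> \<longleftrightarrow> (j = Suc i \<or> i = Suc j)" using ij by auto
      also have "\<dots> \<longleftrightarrow> (j = Suc i mod n \<or> i = Suc j mod n)"
        using cyc_iff[of i n j] ij ik False m3 nkm by auto
      finally show ?thesis .
    qed
  qed
  have "set c \<subseteq> set p \<union> set q"
  proof
    fix x assume "x \<in> set c"
    then obtain i where i: "i < n" "x = g i" by (auto simp: c_def)
    show "x \<in> set p \<union> set q"
    proof (cases "i < k")
      case True then show ?thesis using i gp by (auto simp: k_def)
    next
      case False then show ?thesis using i gq[of i] by (auto simp: m_def)
    qed
  qed
  moreover have "distinct c" using inj by (simp add: c_def distinct_map)
  ultimately show ?thesis using lc n4 cn adj by (intro exI[of _ c]) auto
qed

definition reach :: "('a \<Rightarrow> 'a \<Rightarrow> bool) \<Rightarrow> 'a set \<Rightarrow> 'a \<Rightarrow> 'a \<Rightarrow> bool" where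
  "reach E S = (\<lambda>x y. E x y \<and> x \<in> S \<and> y \<in> S)\<^sup>*\<^sup>*"

lemma is_path_succ: "is_path X E p \<longleftrightarrow> p \<noteq> [] \<and> distinct p \<and> set p \<subseteq> X \<and> successively E p"
  unfolding is_path_def successively_conv_nth by auto

lemma last_take_nth_conv: "i < length p \<Longrightarrow> last (take (Suc i) p) = p!i"
  by (simp add: take_Suc_conv_app_nth)

lemma reach_refl[simp]: "reach E S u u"
  by (simp add: reach_def)

lemma reach_trans: "reach E S u v \<Longrightarrow> reach E S v w \<Longrightarrow> reach E S u w"
  unfolding reach_def by (rule rtranclp_trans)

lemma reach_step: "reach E S u v \<Longrightarrow> E v w \<Longrightarrow> v \<in> S \<Longrightarrow> w \<in> S \<Longrightarrow> reach E S u w"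
  unfolding reach_def by (rule rtranclp.rtrancl_into_rtrancl) auto

lemma reach_edge: "E v w \<Longrightarrow> v \<in> S \<Longrightarrow> w \<in> S \<Longrightarrow> reach E S v w"
  using reach_step[of E S v v w] by simp

lemma reach_mono: "reach E S u v \<Longrightarrow> S \<subseteq> T \<Longrightarrow> reach E T u v"
  unfolding reach_def by (erule rtranclp_mono[THEN predicate2D, rotated]) auto

lemma reach_sym:
  assumes sym: "\<forall>u v. E u v \<longrightarrow> E v u" and r: "reach E S u v"
  shows "reach E S v u"
  using r unfolding reach_def
proof (induction rule: rtranclp_induct)
  case base then show ?case by simp
next
  case (step y z)
  then show ?case using sym by (metis (mono_tags, lifting) converse_rtranclp_into_rtranclp)
qed

lemma reach_in: "reach E S u v \<Longrightarrow> u \<noteq> v \<Longrightarrow> u \<in> S \<and> v \<in> S"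
  unfolding reach_def
  by (induction rule: rtranclp_induct) auto

lemma reach_first:
  assumes "reach E S u v" "u \<noteq> v"
  shows "\<exists>w\<in>S. E u w \<and> reach E S w v"
  using assms unfolding reach_def
  by (induction rule: converse_rtranclp_induct) auto

lemma reach_comp:
  assumes "reach E S u v"
  shows "reach E {w. reach E S u w} u v"
  using assms
proof (induction rule: rtranclp_induct[OF assms[unfolded reach_def]])
  case 1 then show ?case by simp
next
  case (2 y z)
  then have ry: "reach E S u y" by (simp add: reach_def)
  then have rz: "reach E S u z" using 2 by (simp add: reach_step)
  show ?case using 2 ry rz reach_step[of E "{w. reach E S u w}" u y z] by (simp add: reach_def)
qed

lemma reach_exit:
  assumes r: "reach E (S \<union> {c}) u v" and nr: "\<not> reach E S u v" and u: "u \<in> S"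
  shows "\<exists>a. reach E S u a \<and> E a c \<and> a \<in> S"
proof -
  have "reach E S u v \<or> (\<exists>a. reach E S u a \<and> E a c \<and> a \<in> S)"
    using r[unfolded reach_def]
  proof (induction rule: rtranclp_induct)
    case base then show ?case by simp
  next
    case (step y z)
    from step.IH show ?case
    proof
      assume ry: "reach E S u y"
      have yS: "y \<in> S" using reach_in[OF ry] u by blast
      show ?thesis
      proof (cases "z \<in> S")
        case True then show ?thesis using ry yS step.hyps(2) reach_step by fastforce
      next
        case False then have "z = c" using step.hyps(2) by auto
        then show ?thesis using ry yS step.hyps(2) by blast
      qed
    qed blast
  qed
  then show ?thesis using nr by blast
qed

lemma reach_path:
  assumes "reach E S u v"
  shows "\<exists>p. is_path (S \<union> {u}) E p \<and> hd p = u \<and> last p = v"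
  using assms[unfolded reach_def]
proof (induction rule: rtranclp_induct)
  case base
  then show ?case by (intro exI[of _ "[u]"]) (auto simp: is_path_succ)
next
  case (step y z)
  then obtain p where p: "is_path (S \<union> {u}) E p" "hd p = u" "last p = y" by blast
  show ?case
  proof (cases "z \<in> set p")
    case True
    then obtain i where i: "i < length p" "p!i = z" by (auto simp: in_set_conv_nth)
    define p' where "p' = take (Suc i) p"
    have "p = p' @ drop (Suc i) p" by (simp add: p'_def)
    then have "is_path (S \<union> {u}) E p'" using p(1) i unfolding is_path_succ
      by (metis Nil_is_append_conv distinct_append set_append le_sup_iff successively_append_iff
          take_eq_Nil nat.distinct(1) p'_def)
    moreover have "hd p' = u" using p i by (simp add: p'_def hd_take)
    moreover have "last p' = z" using i by (simp add: p'_def last_take_nth_conv)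
    ultimately show ?thesis by blast
  next
    case False
    have "is_path (S \<union> {u}) E (p @ [z])" using p False step.hyps(2)
      unfolding is_path_succ by (auto simp: successively_append_iff)
    then show ?thesis using p by (intro exI[of _ "p @ [z]"]) (auto simp: is_path_succ hd_append)
  qed
qed

lemma path_reach:
  assumes p: "is_path X E p" and i: "i < length p"
  shows "reach E (set p) (hd p) (p!i)"
  using i
proof (induction i)
  case 0 then show ?case using p by (simp add: hd_conv_nth is_path_def)
next
  case (Suc i)
  then have "E (p!i) (p!Suc i)" using p by (simp add: is_path_def)
  then show ?case using Suc reach_step[of E "set p" "hd p" "p!i" "p!Suc i"] by simp
qed

lemma shortcut:
  assumes p: "is_path X E p" and ij: "Suc i < j" "j < length p" and e: "E (p!i) (p!j)"
  shows "is_path X E (take (Suc i) p @ drop j p) \<and> hd (take (Suc i) p @ drop j p) = hd p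
    \<and> last (take (Suc i) p @ drop j p) = last p \<and> length (take (Suc i) p @ drop j p) < length p"
proof -
  have p1: "p = take (Suc i) p @ drop (Suc i) p" by simp
  have p2: "p = take j p @ drop j p" by simp
  have s1: "successively E (take (Suc i) p)" using p unfolding is_path_succ
    by (metis p1 successively_append_iff)
  have s2: "successively E (drop j p)" using p unfolding is_path_succ
    by (metis p2 successively_append_iff)
  have lt: "last (take (Suc i) p) = p!i" using ij by (simp add: last_take_nth_conv)
  have hd: "hd (drop j p) = p!j" using ij by (simp add: hd_drop_conv_nth)
  have ds: "set (take (Suc i) p) \<inter> set (drop j p) = {}"
    using p ij by (intro set_take_disj_set_drop_if_distinct) (auto simp: is_path_def)
  have dd: "distinct (take (Suc i) p @ drop j p)" using p ds by (auto simp: is_path_def)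
  have st: "set (take (Suc i) p @ drop j p) \<subseteq> X" using p
    by (auto simp: is_path_def dest: in_set_takeD in_set_dropD)
  show ?thesis using s1 s2 lt hd dd st ij e
    by (auto simp: is_path_succ successively_append_iff hd_append)
qed

definition clique :: "('a \<Rightarrow> 'a \<Rightarrow> bool) \<Rightarrow> 'a set \<Rightarrow> bool" where
  "clique E K \<longleftrightarrow> (\<forall>u\<in>K. \<forall>v\<in>K. u \<noteq> v \<longrightarrow> E u v)"

definition simplicial :: "('a \<Rightarrow> 'a \<Rightarrow> bool) \<Rightarrow> 'a set \<Rightarrow> 'a \<Rightarrow> bool" where
  "simplicial E W s \<longleftrightarrow> s \<in> W \<and> (\<forall>x\<in>W. \<forall>y\<in>W. E s x \<longrightarrow> E s y \<longrightarrow> x \<noteq> y \<longrightarrow> E x y)"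

locale cg =
  fixes V :: "'a set" and E :: "'a \<Rightarrow> 'a \<Rightarrow> bool"
  assumes g: "graph V E" and ch: "chordal V E"
begin

lemma sym: "E u v \<Longrightarrow> E v u" using g by (auto simp: graph_def)
lemma symA: "\<forall>u v. E u v \<longrightarrow> E v u" using sym by blast
lemma irr: "\<not> E v v" using g by (auto simp: graph_def)
lemma inV: "E u v \<Longrightarrow> u \<in> V \<and> v \<in> V" using g by (auto simp: graph_def)
lemma finV: "finite V" using g by (auto simp: graph_def)

lemma induced_path:
  assumes r: "reach E X u v" and u: "u \<in> X"
  shows "\<exists>p. is_path X E p \<and> hd p = u \<and> last p = v \<and>
    (\<forall>i<length p. \<forall>j<length p. E (p!i) (p!j) \<longleftrightarrow> (j = Suc i \<or> i = Suc j))"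
proof -
  define P where "P p \<longleftrightarrow> is_path X E p \<and> hd p = u \<and> last p = v" for p
  obtain p0 where "P p0" using reach_path[OF r] u by (auto simp: P_def insert_absorb)
  then obtain p where pP: "P p" and pmin: "\<And>q. P q \<Longrightarrow> length p \<le> length q"
    using ex_has_least_nat[of P p0 length] by blast
  have ip: "is_path X E p" using pP by (simp add: P_def)
  have "E (p!i) (p!j) \<longleftrightarrow> (j = Suc i \<or> i = Suc j)" if ij: "i < length p" "j < length p" for i j
  proof
    assume e: "E (p!i) (p!j)"
    show "j = Suc i \<or> i = Suc j"
    proof (rule ccontr)
      assume nc: "\<not> (j = Suc i \<or> i = Suc j)"
      have "i \<noteq> j" using e irr by auto
      then consider "Suc i < j" | "Suc j < i" using nc by linarith
      then show False
      proof cases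
        case 1
        then show False using shortcut[OF ip 1 ij(2) e] pmin[of "take (Suc i) p @ drop j p"] pP
          by (auto simp: P_def)
      next
        case 2
        have e': "E (p!j) (p!i)" using e sym by blast
        then show False using shortcut[OF ip 2 ij(1) e'] pmin[of "take (Suc j) p @ drop i p"] pP
          by (auto simp: P_def)
      qed
    qed
  next
    assume "j = Suc i \<or> i = Suc j"
    then show "E (p!i) (p!j)" using ip ij sym by (auto simp: is_path_def)
  qed
  then show ?thesis using pP by (auto simp: P_def)
qed

lemma through:
  assumes W: "W \<subseteq> V" and C: "C \<subseteq> W" and z: "z \<in> W - C"
    and c: "c1 \<in> C" "c2 \<in> C" "c1 \<noteq> c2" "\<not> E c1 c2"
    and a1: "reach E (W - C) z a1" "E a1 c1"
    and a2: "reach E (W - C) z a2" "E a2 c2"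
  shows "\<exists>p. is_path V E p \<and> p!0 = c1 \<and> p!(length p - 1) = c2 \<and> length p \<ge> 3 \<and>
    (\<forall>i<length p. \<forall>j<length p. E (p!i) (p!j) \<longleftrightarrow> (j = Suc i \<or> i = Suc j)) \<and>
    (\<forall>i. 0 < i \<longrightarrow> i < length p - 1 \<longrightarrow> reach E (W - C) z (p!i))"
proof -
  define Z where "Z = {w. reach E (W - C) z w}"
  have ZW: "Z \<subseteq> W - C" using z by (auto simp: Z_def dest: reach_in)
  have r1: "reach E Z z a1" using reach_comp[OF a1(1)] by (simp add: Z_def)
  have r2: "reach E Z z a2" using reach_comp[OF a2(1)] by (simp add: Z_def)
  have r12: "reach E Z a1 a2" using reach_trans[OF reach_sym[OF symA r1] r2] .
  define Z' where "Z' = Z \<union> {c1, c2}"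
  have a1Z: "a1 \<in> Z" "a2 \<in> Z" using a1 a2 by (auto simp: Z_def)
  have "reach E Z' c1 a1" using a1Z a1 sym by (intro reach_edge) (auto simp: Z'_def)
  moreover have "reach E Z' a1 a2" using reach_mono[OF r12, of Z'] by (auto simp: Z'_def)
  moreover have "reach E Z' a2 c2" using a1Z a2 sym by (intro reach_edge) (auto simp: Z'_def)
  ultimately have "reach E Z' c1 c2" using reach_trans by metis
  then obtain p where p: "is_path Z' E p" "hd p = c1" "last p = c2"
    and ind: "\<forall>i<length p. \<forall>j<length p. E (p!i) (p!j) \<longleftrightarrow> (j = Suc i \<or> i = Suc j)"
    using induced_path[of Z' c1 c2] by (auto simp: Z'_def)
  have ne: "p \<noteq> []" using p by (simp add: is_path_def)
  have p0: "p!0 = c1" using p ne by (simp add: hd_conv_nth)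
  have pl: "p!(length p - 1) = c2" using p ne by (simp add: last_conv_nth)
  have Z'V: "Z' \<subseteq> V" using ZW W C c by (auto simp: Z'_def)
  have pV: "is_path V E p" using p(1) Z'V by (auto simp: is_path_def)
  have l3: "length p \<ge> 3"
  proof (rule ccontr)
    assume n3: "\<not> 3 \<le> length p"
    have "length p > 0" using ne by simp
    then consider "length p = 1" | "length p = 2" using n3 by linarith
    then show False
    proof cases
      case 1 then show False using p0 pl c by simp
    next
      case 2 then show False using p0 pl c ind by (metis One_nat_def diff_Suc_1 lessI numeral_2_eq_2 zero_less_Suc)
    qed
  qed
  have "reach E (W - C) z (p!i)" if i: "0 < i" "i < length p - 1" for i
  proof -
    have d: "distinct p" using p by (simp add: is_path_def)
    have il: "i < length p" "0 < length p" using i by auto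
    have "p!i \<noteq> p!0" using nth_eq_iff_index_eq[OF d il(1) il(2)] i by simp
    moreover have "p!i \<noteq> p!(length p - 1)" using nth_eq_iff_index_eq[OF d il(1), of "length p - 1"] i by simp
    moreover have "p!i \<in> Z'" using p i by (auto simp: is_path_def)
    ultimately show ?thesis using p0 pl by (auto simp: Z'_def Z_def)
  qed
  then show ?thesis using pV p0 pl l3 ind by blast
qed

lemma sep_clique:
  assumes W: "W \<subseteq> V" and C: "C \<subseteq> W" and x0: "x0 \<in> W - C" and y0: "y0 \<in> W - C"
    and nr: "\<not> reach E (W - C) x0 y0"
    and full: "\<forall>c\<in>C. (\<exists>a. reach E (W-C) x0 a \<and> E a c) \<and> (\<exists>b. reach E (W-C) y0 b \<and> E b c)"
  shows "clique E C"
  unfolding clique_def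
proof (intro ballI impI, rule ccontr)
  fix c1 c2 assume c: "c1 \<in> C" "c2 \<in> C" "c1 \<noteq> c2" "\<not> E c1 c2"
  obtain a1 a2 b1 b2 where a: "reach E (W-C) x0 a1" "E a1 c1" "reach E (W-C) x0 a2" "E a2 c2"
    and b: "reach E (W-C) y0 b1" "E b1 c1" "reach E (W-C) y0 b2" "E b2 c2"
    using full c by meson
  obtain p where p: "is_path V E p" "p!0 = c1" "p!(length p - 1) = c2" "length p \<ge> 3"
    "\<forall>i<length p. \<forall>j<length p. E (p!i) (p!j) \<longleftrightarrow> (j = Suc i \<or> i = Suc j)"
    "\<forall>i. 0 < i \<longrightarrow> i < length p - 1 \<longrightarrow> reach E (W - C) x0 (p!i)"
    using through[OF W C x0 c a] by blast
  obtain q where q: "is_path V E q" "q!0 = c1" "q!(length q - 1) = c2" "length q \<ge> 3"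
    "\<forall>i<length q. \<forall>j<length q. E (q!i) (q!j) \<longleftrightarrow> (j = Suc i \<or> i = Suc j)"
    "\<forall>i. 0 < i \<longrightarrow> i < length q - 1 \<longrightarrow> reach E (W - C) y0 (q!i)"
    using through[OF W C y0 c b] by blast
  have disj: "\<forall>i j. 0<i \<longrightarrow> i<length p - 1 \<longrightarrow> 0<j \<longrightarrow> j< length q - 1 \<longrightarrow> p!i \<noteq> q!j \<and> \<not> E (p!i) (q!j)"
  proof (intro allI impI)
    fix i j assume ij: "0 < i" "i < length p - 1" "0 < j" "j < length q - 1"
    have rp: "reach E (W - C) x0 (p!i)" and rq: "reach E (W - C) y0 (q!j)" using p(6) q(6) ij by auto
    show "p!i \<noteq> q!j \<and> \<not> E (p!i) (q!j)"
    proof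
      show "p!i \<noteq> q!j"
        using rp rq nr reach_trans reach_sym[OF symA] by metis
    next
      show "\<not> E (p!i) (q!j)"
      proof
        assume e: "E (p!i) (q!j)"
        have "p!i \<in> W - C" using rp x0 reach_in by metis
        moreover have "q!j \<in> W - C" using rq y0 reach_in by metis
        ultimately have "reach E (W - C) x0 (q!j)" using reach_step[OF rp e] by blast
        then show False using rq nr reach_trans reach_sym[OF symA] by metis
      qed
    qed
  qed
  obtain cy where cy: "length cy \<ge> 4" "distinct cy" "set cy \<subseteq> set p \<union> set q"
     "\<forall>i<length cy. \<forall>j<length cy. E (cy!i) (cy!j) \<longleftrightarrow> (j = Suc i mod length cy \<or> i = Suc j mod length cy)"
    using cycle_from_paths[OF symA _ _ p(5) q(5) _ _ p(4) q(4) disj] p q by (auto simp: is_path_def)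
  have "set cy \<subseteq> V" using cy(3) p(1) q(1) by (auto simp: is_path_def)
  then show False using ch cy unfolding chordal_def by blast
qed

end

context cg begin

lemma side:
  assumes W: "W \<subseteq> V" and C: "C \<subseteq> W" "clique E C" and x: "x \<in> W - C"
    and A: "A = {v. reach E (W - C) x v}"
    and IH: "clique E (A \<union> C) \<or> (\<exists>a b. simplicial E (A \<union> C) a \<and> simplicial E (A \<union> C) b \<and> a \<noteq> b \<and> \<not> E a b)"
  shows "\<exists>a\<in>A. simplicial E W a"
proof -
  have xA: "x \<in> A" using A by simp
  have AW: "A \<subseteq> W - C"
  proof
    fix v assume "v \<in> A"
    then have "reach E (W - C) x v" using A by simp
    then show "v \<in> W - C" using x reach_in[of E "W - C" x v] by (cases "x = v") auto
  qed
  have clos: "u \<in> A" if au: "a \<in> A" "u \<in> W" "u \<notin> C" "E a u" for a u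
  proof -
    have "reach E (W - C) x a" using au(1) A by simp
    moreover have "a \<in> W - C" using AW au(1) by blast
    ultimately have "reach E (W - C) x u" using reach_step[of E "W - C" x a u] au by blast
    then show ?thesis using A by simp
  qed
  obtain a where aA: "a \<in> A" and as: "simplicial E (A \<union> C) a"
  proof -
    from IH show thesis
    proof
      assume "clique E (A \<union> C)"
      then have "simplicial E (A \<union> C) x" using xA unfolding clique_def simplicial_def by blast
      then show thesis by (rule that[OF xA])
    next
      assume "\<exists>a b. simplicial E (A \<union> C) a \<and> simplicial E (A \<union> C) b \<and> a \<noteq> b \<and> \<not> E a b"
      then obtain a b where ab: "simplicial E (A \<union> C) a" "simplicial E (A \<union> C) b" "a \<noteq> b" "\<not> E a b"
        by blast
      show thesis
      proof (cases "a \<in> A")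
        case True show thesis by (rule that[OF True ab(1)])
      next
        case False
        show thesis
        proof (cases "b \<in> A")
          case True show thesis by (rule that[OF True ab(2)])
        next
          case False2: False
          have "a \<in> A \<union> C" "b \<in> A \<union> C" using ab(1,2) unfolding simplicial_def by blast+
          then have "a \<in> C" "b \<in> C" using False False2 by blast+
          then have "E a b" using C(2) ab(3) unfolding clique_def by blast
          then show thesis using ab(4) by blast
        qed
      qed
    qed
  qed
  have "simplicial E W a"
    unfolding simplicial_def
  proof (intro conjI ballI impI)
    show "a \<in> W" using aA AW by auto
  next
    fix y z assume yz: "y \<in> W" "z \<in> W" "E a y" "E a z" "y \<noteq> z"
    have "y \<in> A \<union> C" using clos[OF aA yz(1) _ yz(3)] by blast
    moreover have "z \<in> A \<union> C" using clos[OF aA yz(2) _ yz(4)] by blast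
    ultimately show "E y z" using as yz by (auto simp: simplicial_def)
  qed
  then show ?thesis using aA by blast
qed

lemma dirac:
  "W \<subseteq> V \<Longrightarrow> W \<noteq> {} \<Longrightarrow> clique E W \<or> (\<exists>a b. simplicial E W a \<and> simplicial E W b \<and> a \<noteq> b \<and> \<not> E a b)"
proof (induction "card W" arbitrary: W rule: less_induct)
  case less
  show ?case
  proof (cases "clique E W")
    case True then show ?thesis by blast
  next
    case False
    then obtain x0 y0 where xy: "x0 \<in> W" "y0 \<in> W" "x0 \<noteq> y0" "\<not> E x0 y0"
      by (auto simp: clique_def)
    have IH: "\<And>W'. card W' < card W \<Longrightarrow> W' \<subseteq> V \<Longrightarrow> W' \<noteq> {} \<Longrightarrow>
      clique E W' \<or> (\<exists>a b. simplicial E W' a \<and> simplicial E W' b \<and> a \<noteq> b \<and> \<not> E a b)"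
      using less.hyps by blast
    have finW: "finite W" using less.prems finV finite_subset by blast
    define Seps where "Seps = {C. C \<subseteq> W - {x0,y0} \<and> \<not> reach E (W - C) x0 y0}"
    have "W - {x0, y0} \<in> Seps"
    proof -
      have eq: "W - (W - {x0,y0}) = {x0,y0}" using xy by auto
      have "\<not> reach E {x0,y0} x0 y0"
      proof
        assume r0: "reach E {x0,y0} x0 y0"
        have "\<exists>w\<in>{x0,y0}. E x0 w \<and> reach E {x0,y0} w y0" by (rule reach_first[OF r0 xy(3)])
        then show False using irr[of x0] xy(4) by blast
      qed
      then show ?thesis using eq by (simp add: Seps_def)
    qed
    then have "\<exists>C. C \<in> Seps \<and> (\<forall>C'. C' \<in> Seps \<longrightarrow> card C \<le> card C')"
      by (rule ex_has_least_nat)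
    then obtain C where CS: "C \<in> Seps" and Cmin: "\<And>C'. C' \<in> Seps \<Longrightarrow> card C \<le> card C'"
      by blast
    have CW: "C \<subseteq> W" "x0 \<notin> C" "y0 \<notin> C" and nr: "\<not> reach E (W - C) x0 y0"
      using CS by (auto simp: Seps_def)
    have finC: "finite C" using CW finW finite_subset by blast
    have x0C: "x0 \<in> W - C" "y0 \<in> W - C" using xy CW by auto
    have nr2: "\<not> reach E (W - C) y0 x0" using nr reach_sym[OF symA] by blast
    have full: "\<forall>c\<in>C. (\<exists>a. reach E (W-C) x0 a \<and> E a c) \<and> (\<exists>b. reach E (W-C) y0 b \<and> E b c)"
    proof
      fix c assume c: "c \<in> C"
      have "C - {c} \<notin> Seps"
      proof
        assume "C - {c} \<in> Seps"
        then have "card C \<le> card (C - {c})" using Cmin by blast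
        then show False using c finC card_Diff1_less[OF finC c] by linarith
      qed
      then have r: "reach E (W - (C - {c})) x0 y0" using CS by (auto simp: Seps_def)
      have eq: "W - (C - {c}) = (W - C) \<union> {c}" using c CW by auto
      have r1: "reach E ((W - C) \<union> {c}) x0 y0" using r eq by simp
      have r2: "reach E ((W - C) \<union> {c}) y0 x0" using reach_sym[OF symA r1] .
      obtain a where "reach E (W - C) x0 a" "E a c" using reach_exit[OF r1 nr x0C(1)] by blast
      moreover obtain b where "reach E (W - C) y0 b" "E b c" using reach_exit[OF r2 nr2 x0C(2)] by blast
      ultimately show "(\<exists>a. reach E (W-C) x0 a \<and> E a c) \<and> (\<exists>b. reach E (W-C) y0 b \<and> E b c)"
        by blast
    qed
    have Ccl: "clique E C" using sep_clique[OF less.prems(1) CW(1) x0C nr full] .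
    define A where "A = {v. reach E (W - C) x0 v}"
    define B where "B = {v. reach E (W - C) y0 v}"
    have AW: "A \<subseteq> W - C" "B \<subseteq> W - C" using x0C by (auto simp: A_def B_def dest: reach_in)
    have AB: "A \<inter> B = {}"
    proof (rule ccontr)
      assume "A \<inter> B \<noteq> {}"
      then obtain v where v: "reach E (W - C) x0 v" "reach E (W - C) y0 v" by (auto simp: A_def B_def)
      then show False using nr reach_trans[OF v(1) reach_sym[OF symA v(2)]] by blast
    qed
    have noE: "\<not> E a b" if ab: "a \<in> A" "b \<in> B" for a b
    proof
      assume e: "E a b"
      have "b \<in> A" using reach_step[of E "W - C" x0 a b] ab AW e by (auto simp: A_def)
      then show False using AB ab by blast
    qed
    have x0A: "x0 \<in> A" "y0 \<in> B" by (auto simp: A_def B_def)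
    have IHA: "clique E (A \<union> C) \<or> (\<exists>a b. simplicial E (A \<union> C) a \<and> simplicial E (A \<union> C) b \<and> a \<noteq> b \<and> \<not> E a b)"
    proof (rule IH)
      have s1: "A \<union> C \<subseteq> W" using AW CW by blast
      have "y0 \<notin> A \<union> C" using x0A AB CW by blast
      then have "A \<union> C \<subset> W" using s1 xy by blast
      then show "card (A \<union> C) < card W" using finW psubset_card_mono by blast
      show "A \<union> C \<subseteq> V" using AW CW less.prems by blast
      show "A \<union> C \<noteq> {}" using x0A by blast
    qed
    have IHB: "clique E (B \<union> C) \<or> (\<exists>a b. simplicial E (B \<union> C) a \<and> simplicial E (B \<union> C) b \<and> a \<noteq> b \<and> \<not> E a b)"
    proof (rule IH)
      have s1: "B \<union> C \<subseteq> W" using AW CW by blast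
      have "x0 \<notin> B \<union> C" using x0A AB CW by blast
      then have "B \<union> C \<subset> W" using s1 xy by blast
      then show "card (B \<union> C) < card W" using finW psubset_card_mono by blast
      show "B \<union> C \<subseteq> V" using AW CW less.prems by blast
      show "B \<union> C \<noteq> {}" using x0A by blast
    qed
    obtain a where a: "a \<in> A" "simplicial E W a" using side[OF less.prems(1) CW(1) Ccl x0C(1) A_def IHA] by blast
    obtain b where b: "b \<in> B" "simplicial E W b" using side[OF less.prems(1) CW(1) Ccl x0C(2) B_def IHB] by blast
    have "a \<noteq> b" using a b AB by blast
    then show ?thesis using a b noE by blast
  qed
qed

lemma simplicial_exists:
  assumes "W \<subseteq> V" "W \<noteq> {}"
  shows "\<exists>s. simplicial E W s"
proof -
  obtain x where x: "x \<in> W" using assms by blast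
  from dirac[OF assms] show ?thesis
  proof
    assume "clique E W"
    then have "simplicial E W x" using x by (auto simp: clique_def simplicial_def)
    then show ?thesis by blast
  qed blast
qed

end

definition conn :: "('a \<Rightarrow> 'a \<Rightarrow> bool) \<Rightarrow> 'a set \<Rightarrow> bool" where
  "conn E S \<longleftrightarrow> S \<noteq> {} \<and> (\<forall>u\<in>S. \<forall>v\<in>S. reach E S u v)"

definition touch :: "('a \<Rightarrow> 'a \<Rightarrow> bool) \<Rightarrow> 'a set \<Rightarrow> 'a set \<Rightarrow> bool" where
  "touch E S T \<longleftrightarrow> S \<inter> T \<noteq> {} \<or> (\<exists>u\<in>S. \<exists>v\<in>T. E u v)"

context cg begin

lemma conn_remove_aux:
  assumes sW: "simplicial E W s" and SW: "S \<subseteq> W" and r: "reach E S u v" and u: "u \<in> S - {s}"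
  shows "(v \<noteq> s \<longrightarrow> reach E (S - {s}) u v) \<and> (v = s \<longrightarrow> (\<exists>w. reach E (S - {s}) u w \<and> E w s \<and> w \<in> S - {s}))"
  using r[unfolded reach_def]
proof (induction rule: rtranclp_induct)
  case base then show ?case using u by auto
next
  case (step y z)
  have yz: "E y z" "y \<in> S" "z \<in> S" using step.hyps(2) by auto
  show ?case
  proof (cases "y = s")
    case False
    then have ry: "reach E (S - {s}) u y" using step.IH by blast
    show ?thesis
    proof (cases "z = s")
      case True then show ?thesis using ry yz False by blast
    next
      case False2: False
      have "reach E (S - {s}) u z" using reach_step[OF ry yz(1)] yz False False2 by blast
      then show ?thesis using False2 by blast
    qed
  next
    case True
    then obtain w where w: "reach E (S - {s}) u w" "E w s" "w \<in> S - {s}" using step.IH by blast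
    have zs: "z \<noteq> s" using True yz irr by blast
    have "reach E (S - {s}) u z"
    proof (cases "w = z")
      case True then show ?thesis using w by simp
    next
      case False
      have "E s w" using sym[OF w(2)] .
      moreover have "E s z" using yz True by simp
      ultimately have "E w z" using sW False w(3) yz(3) SW unfolding simplicial_def by blast
      then show ?thesis using reach_step[OF w(1)] w(3) yz(3) zs by blast
    qed
    then show ?thesis using zs by blast
  qed
qed

lemma conn_remove:
  assumes sW: "simplicial E W s" and SW: "S \<subseteq> W" and c: "conn E S" and ne: "S - {s} \<noteq> {}"
  shows "conn E (S - {s})"
  unfolding conn_def
proof (intro conjI ballI)
  show "S - {s} \<noteq> {}" by fact
next
  fix u v assume uv: "u \<in> S - {s}" "v \<in> S - {s}"
  have r: "reach E S u v" using c uv unfolding conn_def by blast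
  have "v \<noteq> s" using uv(2) by blast
  then show "reach E (S - {s}) u v" using conn_remove_aux[OF sW SW r uv(1)] by simp
qed

lemma nbr_in:
  assumes c: "conn E S" and sS: "s \<in> S" and ne: "S \<noteq> {s}"
  shows "\<exists>w\<in>S - {s}. E s w"
proof -
  obtain u where u: "u \<in> S" "u \<noteq> s" using ne sS by blast
  have r: "reach E S s u" using c sS u(1) unfolding conn_def by blast
  have "\<exists>w\<in>S. E s w \<and> reach E S w u" by (rule reach_first[OF r]) (use u in simp)
  then obtain w where w: "w \<in> S" "E s w" by blast
  have "w \<noteq> s" using irr[of s] w(2) by blast
  then show ?thesis using w by blast
qed

lemma helly:
  "W \<subseteq> V \<Longrightarrow> (\<forall>S\<in>F. S \<subseteq> W \<and> conn E S) \<Longrightarrow> (\<forall>S\<in>F. \<forall>T\<in>F. touch E S T) \<Longrightarrow>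
    \<exists>K \<subseteq> W. clique E K \<and> (\<forall>S\<in>F. S \<inter> K \<noteq> {})"
proof (induction "card W" arbitrary: W F rule: less_induct)
  case less
  have IH: "\<And>W' F'. card W' < card W \<Longrightarrow> W' \<subseteq> V \<Longrightarrow> (\<forall>S\<in>F'. S \<subseteq> W' \<and> conn E S) \<Longrightarrow>
     (\<forall>S\<in>F'. \<forall>T\<in>F'. touch E S T) \<Longrightarrow> \<exists>K \<subseteq> W'. clique E K \<and> (\<forall>S\<in>F'. S \<inter> K \<noteq> {})"
    by (fact less.hyps)
  have WV: "W \<subseteq> V" and FW: "\<forall>S\<in>F. S \<subseteq> W \<and> conn E S" and FT: "\<forall>S\<in>F. \<forall>T\<in>F. touch E S T"
    using less.prems by auto
  have finW: "finite W" using WV finV finite_subset by blast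
  show ?case
  proof (cases "W = {}")
    case True
    have "S = {}" if "S \<in> F" for S using FW that True by blast
    then have "F = {}" using FW unfolding conn_def by blast
    then show ?thesis unfolding clique_def by blast
  next
    case False
    obtain s where sW: "simplicial E W s" using simplicial_exists[OF WV False] by blast
    have sinW: "s \<in> W" using sW by (simp add: simplicial_def)
    show ?thesis
    proof (cases "{s} \<in> F")
      case True
      define K where "K = {s} \<union> {u\<in>W. E s u}"
      have "K \<subseteq> W" using sinW by (auto simp: K_def)
      moreover have "clique E K"
        unfolding clique_def
      proof (intro ballI impI)
        fix u v assume uv: "u \<in> K" "v \<in> K" "u \<noteq> v"
        show "E u v"
        proof (cases "u = s")
          case True then show ?thesis using uv by (auto simp: K_def)
        next
          case False
          show ?thesis
          proof (cases "v = s")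
            case True
            then have "E s u" using uv False by (auto simp: K_def)
            then show ?thesis using sym[of s u] True by simp
          next
            case False2: False
            have "u \<in> W" "E s u" "v \<in> W" "E s v" using uv False False2 by (auto simp: K_def)
            then show ?thesis using sW uv(3) unfolding simplicial_def by blast
          qed
        qed
      qed
      moreover have "\<forall>T\<in>F. T \<inter> K \<noteq> {}"
      proof
        fix T assume T: "T \<in> F"
        have "touch E {s} T" using FT True T by blast
        then have "s \<in> T \<or> (\<exists>v\<in>T. E s v)" unfolding touch_def by blast
        moreover have "T \<subseteq> W" using FW T by blast
        ultimately show "T \<inter> K \<noteq> {}" unfolding K_def by blast
      qed
      ultimately show ?thesis by (intro exI[of _ K]) blast
    next
      case False
      define F' where "F' = (\<lambda>S. S - {s}) ` F"
      have neS: "S - {s} \<noteq> {}" if "S \<in> F" for S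
      proof
        assume "S - {s} = {}"
        then have "S \<subseteq> {s}" by blast
        moreover have "S \<noteq> {}" using that FW unfolding conn_def by blast
        ultimately have "S = {s}" using subset_singletonD by blast
        then show False using that False by simp
      qed
      have nbr: "\<exists>w\<in>S - {s}. E s w" if "S \<in> F" "s \<in> S" for S
      proof -
        have c: "conn E S" using FW that(1) by blast
        have "S \<noteq> {s}" using neS[OF that(1)] by blast
        then show ?thesis using nbr_in[OF c that(2)] by blast
      qed
      have FW': "\<forall>S\<in>F'. S \<subseteq> W - {s} \<and> conn E S"
      proof
        fix S' assume "S' \<in> F'"
        then obtain S where S: "S \<in> F" "S' = S - {s}" unfolding F'_def by blast
        have SW: "S \<subseteq> W" and c: "conn E S" using FW S(1) by auto
        have "conn E (S - {s})" using conn_remove[OF sW SW c neS[OF S(1)]] .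
        then show "S' \<subseteq> W - {s} \<and> conn E S'" using S SW by blast
      qed
      have FT': "\<forall>S\<in>F'. \<forall>T\<in>F'. touch E S T"
        unfolding F'_def
      proof (intro ballI, elim imageE)
        fix S' T' S T assume S: "S \<in> F" "S' = S - {s}" and T: "T \<in> F" "T' = T - {s}"
        have SW: "S \<subseteq> W" "T \<subseteq> W" using FW S T by auto
        have adj: "touch E (S - {s}) (T - {s})" if w: "w1 \<in> S - {s}" "w2 \<in> T - {s}" "E s w1" "E s w2" for w1 w2
        proof (cases "w1 = w2")
          case True then show ?thesis using w unfolding touch_def by blast
        next
          case False
          then have "E w1 w2" using sW w SW unfolding simplicial_def by blast
          then show ?thesis using w unfolding touch_def by blast
        qed
        have "touch E S T" using FT S T by blast
        then consider (i) v where "v \<in> S" "v \<in> T" | (e) u v where "u \<in> S" "v \<in> T" "E u v"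
          unfolding touch_def by blast
        then show "touch E S' T'"
        proof cases
          case (i v)
          show ?thesis
          proof (cases "v = s")
            case True
            obtain w1 where "w1 \<in> S - {s}" "E s w1" using nbr[OF S(1)] i True by blast
            moreover obtain w2 where "w2 \<in> T - {s}" "E s w2" using nbr[OF T(1)] i True by blast
            ultimately show ?thesis using adj S T by blast
          next
            case False then show ?thesis using i S T unfolding touch_def by blast
          qed
        next
          case (e u v)
          have uv: "u \<noteq> v" using e irr by blast
          show ?thesis
          proof (cases "u = s")
            case True
            obtain w1 where w1: "w1 \<in> S - {s}" "E s w1" using nbr[OF S(1)] e True by blast
            have v: "v \<in> T - {s}" "E s v" using e True uv by auto
            show ?thesis using adj[OF w1(1) v(1) w1(2) v(2)] S T by simp
          next
            case False
            show ?thesis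
            proof (cases "v = s")
              case True
              obtain w2 where w2: "w2 \<in> T - {s}" "E s w2" using nbr[OF T(1)] e True by blast
              have u: "u \<in> S - {s}" "E s u" using e True False sym[of u v] by auto
              show ?thesis using adj[OF u(1) w2(1) u(2) w2(2)] S T by simp
            next
              case False2: False
              then show ?thesis using e False S T unfolding touch_def by blast
            qed
          qed
        qed
      qed
      have "card (W - {s}) < card W" using card_Diff1_less[OF finW sinW] .
      moreover have "W - {s} \<subseteq> V" using WV by blast
      ultimately obtain K where K: "K \<subseteq> W - {s}" "clique E K" "\<forall>S\<in>F'. S \<inter> K \<noteq> {}"
        using IH[OF _ _ FW' FT'] by blast
      have "\<forall>S\<in>F. S \<inter> K \<noteq> {}"
      proof
        fix S assume "S \<in> F"
        then have "(S - {s}) \<inter> K \<noteq> {}" using K(3) by (auto simp: F'_def)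
        then show "S \<inter> K \<noteq> {}" by blast
      qed
      then show ?thesis using K by blast
    qed
  qed
qed

end

lemma is_path_take: "is_path X E p \<Longrightarrow> 0 < k \<Longrightarrow> is_path X E (take k p)"
proof -
  assume p: "is_path X E p" and k: "0 < k"
  have "successively E (take k p @ drop k p)" using p by (simp add: is_path_succ)
  then have "successively E (take k p)" by (simp only: successively_append_iff)
  moreover have "set (take k p) \<subseteq> X" using p by (auto simp: is_path_def dest: in_set_takeD)
  ultimately show ?thesis using p k by (auto simp: is_path_succ)
qed

lemma is_path_drop: "is_path X E p \<Longrightarrow> k < length p \<Longrightarrow> is_path X E (drop k p)"
proof -
  assume p: "is_path X E p" and k: "k < length p"
  have "successively E (take k p @ drop k p)" using p by (simp add: is_path_succ)
  then have "successively E (drop k p)" by (simp only: successively_append_iff)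
  moreover have "set (drop k p) \<subseteq> X" using p by (auto simp: is_path_def dest: in_set_dropD)
  ultimately show ?thesis using p k by (auto simp: is_path_succ)
qed

lemma path_conn:
  assumes sym: "\<forall>u v. E u v \<longrightarrow> E v u" and p: "is_path X E p"
  shows "conn E (set p)"
  unfolding conn_def
proof (intro conjI ballI)
  show "set p \<noteq> {}" using p by (simp add: is_path_def)
next
  fix u v assume "u \<in> set p" "v \<in> set p"
  then obtain i j where ij: "i < length p" "p!i = u" "j < length p" "p!j = v" by (auto simp: in_set_conv_nth)
  have "reach E (set p) (hd p) (p!i)" "reach E (set p) (hd p) (p!j)" using path_reach[OF p] ij by auto
  then show "reach E (set p) u v" using ij reach_trans reach_sym[OF sym] by metis
qed

context cg begin

lemma is_path_rev: "is_path X E p \<Longrightarrow> is_path X E (rev p)"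
proof -
  assume p: "is_path X E p"
  have "successively E p" using p by (simp add: is_path_succ)
  then have "successively (\<lambda>x y. E y x) p" by (rule successively_mono) (rule sym)
  then show ?thesis using p by (simp add: is_path_succ)
qed

lemma half:
  assumes p: "is_path X E p" and i: "i < length p"
  shows "\<exists>A. is_path X E A \<and> set A \<subseteq> set p \<and> last A = p!i \<and> length p + 1 \<le> 2 * length A"
proof (cases "length p + 1 \<le> 2 * Suc i")
  case True
  have "is_path X E (take (Suc i) p)" using is_path_take[OF p] by simp
  moreover have "last (take (Suc i) p) = p!i" using i by (rule last_take_nth_conv)
  moreover have "length (take (Suc i) p) = Suc i" using i by simp
  ultimately show ?thesis using True by (intro exI[of _ "take (Suc i) p"]) (auto dest: in_set_takeD)
next
  case False
  have "is_path X E (rev (drop i p))" using is_path_rev[OF is_path_drop[OF p i]] .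
  moreover have "last (rev (drop i p)) = p!i" using i by (simp add: last_rev hd_drop_conv_nth)
  moreover have "length (rev (drop i p)) = length p - i" by simp
  ultimately show ?thesis using False i by (intro exI[of _ "rev (drop i p)"]) (auto dest: in_set_dropD)
qed

lemma join3:
  assumes A: "is_path X E A" and r: "is_path X E r" and B: "is_path X E B"
    and h1: "last A = hd r" and h2: "hd B = last r"
    and d1: "set (butlast A) \<inter> set r = {}" and d2: "set (tl B) \<inter> set r = {}"
    and d3: "set (butlast A) \<inter> set (tl B) = {}"
  shows "is_path X E (butlast A @ r @ tl B) \<and> length (butlast A @ r @ tl B) = length A + length r + length B - 2"
proof -
  have neA: "A \<noteq> []" and neB: "B \<noteq> []" and ner: "r \<noteq> []" using A B r by (auto simp: is_path_def)
  have eA: "A = butlast A @ [hd r]" using neA h1 by (metis append_butlast_last_id)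
  have eB: "B = last r # tl B" using neB h2 by (metis list.collapse)
  have sA: "successively E (butlast A @ [hd r])" using A eA by (metis is_path_succ)
  have sB: "successively E (last r # tl B)" using B eB by (metis is_path_succ)
  have sr: "successively E r" using r by (simp add: is_path_succ)
  have er: "r = butlast r @ [last r]" using ner by simp
  have s1: "successively E (r @ tl B)"
  proof -
    have "successively E (butlast r @ (last r # tl B))"
      using sr sB er successively_append_iff[of E "butlast r" "[last r]"]
        successively_append_iff[of E "butlast r" "last r # tl B"] by (metis list.sel(1) list.discI)
    then show ?thesis using er by (metis append.assoc append_Cons append_Nil)
  qed
  have s2: "successively E (butlast A @ r @ tl B)"
  proof -
    have er2: "r @ tl B = hd r # (tl r @ tl B)" using ner by simp
    have "successively E (butlast A @ (hd r # (tl r @ tl B)))"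
      using sA s1 er2 successively_append_iff[of E "butlast A" "[hd r]"]
        successively_append_iff[of E "butlast A" "hd r # (tl r @ tl B)"] by (metis list.sel(1) list.discI)
    then show ?thesis by (subst er2)
  qed
  have dA: "distinct (butlast A)" using A by (simp add: is_path_def distinct_butlast)
  have dB: "distinct (tl B)" using B by (simp add: is_path_def distinct_tl)
  have dr: "distinct r" using r by (simp add: is_path_def)
  have "distinct (butlast A @ r @ tl B)" using dA dB dr d1 d2 d3 by auto
  moreover have "set (butlast A @ r @ tl B) \<subseteq> X" using A B r
    by (auto simp: is_path_def dest: in_set_butlastD list.set_sel(2))
  moreover have "length (butlast A @ r @ tl B) = length A + length r + length B - 2"
    using neA neB by (cases A; cases B) auto
  ultimately show ?thesis using s2 ner by (auto simp: is_path_succ)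
qed

end

context cg begin

lemma longest_intersect:
  assumes cn: "connected_graph V E" and P: "longest_path V E P" and Q: "longest_path V E Q"
  shows "set P \<inter> set Q \<noteq> {}"
proof
  assume D: "set P \<inter> set Q = {}"
  have pP: "is_path V E P" and pQ: "is_path V E Q" using P Q by (auto simp: longest_path_def)
  have neP: "P \<noteq> []" and neQ: "Q \<noteq> []" using pP pQ by (auto simp: is_path_def)
  have hP: "hd P \<in> V" "hd Q \<in> V" using pP pQ neP neQ by (auto simp: is_path_def)
  obtain r0 where r0: "is_path V E r0" "hd r0 = hd P" "last r0 = hd Q"
    using cn hP unfolding connected_graph_def by blast
  define R where "R r \<longleftrightarrow> is_path V E r \<and> hd r \<in> set P \<and> last r \<in> set Q" for r
  have "R r0" using r0 neP neQ by (simp add: R_def)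
  then obtain r where Rr: "R r" and rmin: "\<And>r'. R r' \<Longrightarrow> length r \<le> length r'"
    using ex_has_least_nat[of R r0 length] by blast
  have pr: "is_path V E r" and hr: "hd r \<in> set P" and lr: "last r \<in> set Q" using Rr by (auto simp: R_def)
  have ner: "r \<noteq> []" using pr by (simp add: is_path_def)
  have noP: "r!l \<notin> set P" if l: "0 < l" "l < length r" for l
  proof
    assume a: "r!l \<in> set P"
    have "R (drop l r)" using is_path_drop[OF pr l(2)] a l lr
      by (simp add: R_def hd_drop_conv_nth last_drop)
    then show False using rmin l by fastforce
  qed
  have noQ: "r!l \<notin> set Q" if l: "l < length r - 1" for l
  proof
    assume a: "r!l \<in> set Q"
    have l': "l < length r" using l by simp
    have "R (take (Suc l) r)" using is_path_take[OF pr, of "Suc l"] a l' hr ner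
      by (simp add: R_def last_take_nth_conv)
    then show False using rmin l by fastforce
  qed
  have inP: "x = hd r" if xr: "x \<in> set r" "x \<in> set P" for x
  proof -
    obtain l where l: "l < length r" "r!l = x" using xr(1) by (auto simp: in_set_conv_nth)
    then have "l = 0" using noP xr(2) by blast
    then show ?thesis using l ner by (simp add: hd_conv_nth)
  qed
  have inQ: "x = last r" if xr: "x \<in> set r" "x \<in> set Q" for x
  proof -
    obtain l where l: "l < length r" "r!l = x" using xr(1) by (auto simp: in_set_conv_nth)
    then have "\<not> l < length r - 1" using noQ xr(2) by blast
    then have "l = length r - 1" using l by simp
    then show ?thesis using l ner by (simp add: last_conv_nth)
  qed
  obtain i where i: "i < length P" "P!i = hd r" using hr by (auto simp: in_set_conv_nth)
  obtain j where j: "j < length Q" "Q!j = last r" using lr by (auto simp: in_set_conv_nth)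
  obtain A where A: "is_path V E A" "set A \<subseteq> set P" "last A = P!i" "length P + 1 \<le> 2 * length A"
    using half[OF pP i(1)] by blast
  obtain A' where A': "is_path V E A'" "set A' \<subseteq> set Q" "last A' = Q!j" "length Q + 1 \<le> 2 * length A'"
    using half[OF pQ j(1)] by blast
  define B where "B = rev A'"
  have neA': "A' \<noteq> []" using A' by (simp add: is_path_def)
  have B: "is_path V E B" "set B \<subseteq> set Q" "hd B = last r" "length Q + 1 \<le> 2 * length B"
    using A' is_path_rev[OF A'(1)] neA' j by (auto simp: B_def hd_rev)
  have neA: "A \<noteq> []" and neB: "B \<noteq> []" using A B by (auto simp: is_path_def)
  have dA: "distinct A" and dB: "distinct B" using A B by (auto simp: is_path_def)
  have d1: "set (butlast A) \<inter> set r = {}"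
  proof (rule ccontr)
    assume "set (butlast A) \<inter> set r \<noteq> {}"
    then obtain x where x: "x \<in> set (butlast A)" "x \<in> set r" by blast
    have "x \<in> set P" using x(1) A(2) by (auto dest: in_set_butlastD)
    then have "x = hd r" using inP x(2) by blast
    then have "x = last A" using A(3) i by simp
    moreover have "last A \<notin> set (butlast A)" using dA neA
      by (metis append_butlast_last_id distinct_append disjoint_iff list.set_intros(1))
    ultimately show False using x(1) by simp
  qed
  have d2: "set (tl B) \<inter> set r = {}"
  proof (rule ccontr)
    assume "set (tl B) \<inter> set r \<noteq> {}"
    then obtain x where x: "x \<in> set (tl B)" "x \<in> set r" by blast
    have "x \<in> set Q" using x(1) B(2) by (auto dest: list.set_sel(2)[OF neB])
    then have "x = last r" using inQ x(2) by blast
    then have "x = hd B" using B(3) by simp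
    moreover have "hd B \<notin> set (tl B)" using dB neB by (metis distinct.simps(2) list.collapse)
    ultimately show False using x(1) by simp
  qed
  have d3: "set (butlast A) \<inter> set (tl B) = {}"
  proof -
    have "set (butlast A) \<subseteq> set P" using A(2) by (meson in_set_butlastD subset_iff)
    moreover have "set (tl B) \<subseteq> set Q" using B(2) neB by (meson list.set_sel(2) subset_iff)
    ultimately show ?thesis using D by blast
  qed
  have lastA: "last A = hd r" using A(3) i by simp
  obtain N where N: "is_path V E N" "length N = length A + length r + length B - 2"
    using join3[OF A(1) pr B(1) lastA B(3) d1 d2 d3] by blast
  have lr2: "length r \<ge> 1" using ner by (cases r) auto
  have "path_length N \<le> path_length P" "path_length N \<le> path_length Q"
    using P Q N(1) by (auto simp: longest_path_def)
  moreover have lN: "0 < length N" "0 < length P" "0 < length Q" using N(1) neP neQ by (auto simp: is_path_def)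
  ultimately have "length N \<le> length P" "length N \<le> length Q" unfolding path_length_def by arith+
  moreover have "length r \<ge> 2"
  proof (rule ccontr)
    assume "\<not> 2 \<le> length r"
    then have "length r = 1" using lr2 by simp
    then have "hd r = last r" using ner by (cases r) auto
    then show False using hr lr D by auto
  qed
  ultimately show False using N(2) A(4) B(4) by linarith
qed

lemma append_longer:
  assumes P: "longest_path V E p" and w: "w \<in> V" "w \<notin> set p" and e: "E (last p) w"
  shows False
proof -
  have pp: "is_path V E p" using P by (simp add: longest_path_def)
  have "is_path V E (p @ [w])" using pp w e by (auto simp: is_path_succ successively_append_iff)
  then have "path_length (p @ [w]) \<le> path_length p" using P by (simp add: longest_path_def)
  moreover have "p \<noteq> []" using pp by (simp add: is_path_def)
  ultimately show False by (cases p) (auto simp: path_length_def)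
qed

lemma insert_longer:
  assumes P: "longest_path V E p" and i: "Suc i < length p" and w: "w \<in> V" "w \<notin> set p"
    and e1: "E (p!i) w" and e2: "E w (p!Suc i)"
  shows False
proof -
  have pp: "is_path V E p" using P by (simp add: longest_path_def)
  define q where "q = take (Suc i) p @ w # drop (Suc i) p"
  have s: "successively E p" using pp by (simp add: is_path_succ)
  have sp: "p = take (Suc i) p @ drop (Suc i) p" by simp
  have s1: "successively E (take (Suc i) p)" and s2: "successively E (drop (Suc i) p)"
    using s sp successively_append_iff by metis+
  have l1: "last (take (Suc i) p) = p!i" using i by (simp add: last_take_nth_conv)
  have h2: "hd (drop (Suc i) p) = p!Suc i" using i by (simp add: hd_drop_conv_nth)
  have ne2: "drop (Suc i) p \<noteq> []" using i by simp
  have sw: "successively E (w # drop (Suc i) p)" using s2 h2 e2 ne2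
    by (cases "drop (Suc i) p") auto
  have "successively E q" unfolding q_def using s1 sw l1 e1
    by (auto simp: successively_append_iff)
  moreover have "distinct q"
  proof -
    have dp: "distinct p" using pp by (simp add: is_path_def)
    have "set (take (Suc i) p) \<inter> set (drop (Suc i) p) = {}"
      by (rule set_take_disj_set_drop_if_distinct[OF dp]) simp
    then show ?thesis using dp w unfolding q_def by (auto dest: in_set_takeD in_set_dropD)
  qed
  moreover have "set q \<subseteq> V" using pp w unfolding q_def is_path_def
    by (auto dest: in_set_takeD in_set_dropD)
  ultimately have "is_path V E q" by (auto simp: is_path_succ q_def)
  then have "path_length q \<le> path_length p" using P by (simp add: longest_path_def)
  moreover have "length q = Suc (length p)" using i by (simp add: q_def)
  ultimately show False using i by (simp add: path_length_def)
qed

end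

lemma four_cases: "(i::nat) < 4 \<Longrightarrow> i = 0 \<or> i = 1 \<or> i = 2 \<or> i = 3" by presburger

lemma cyc4:
  assumes e: "E x0 x1" "E x1 x2" "E x2 x3" "E x3 x0" "E x1 x0" "E x2 x1" "E x3 x2" "E x0 x3"
    and irr: "\<not> E x0 x0" "\<not> E x1 x1" "\<not> E x2 x2" "\<not> E x3 x3"
    and n: "\<not> E x0 x2" "\<not> E x1 x3" "\<not> E x2 x0" "\<not> E x3 x1"
  shows "\<forall>i<length [x0,x1,x2,x3]. \<forall>j<length [x0,x1,x2,x3].
    E ([x0,x1,x2,x3]!i) ([x0,x1,x2,x3]!j) \<longleftrightarrow>
      (j = Suc i mod length [x0,x1,x2,x3] \<or> i = Suc j mod length [x0,x1,x2,x3])"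
proof (intro allI impI)
  fix i j assume ij: "i < length [x0,x1,x2,x3]" "j < length [x0,x1,x2,x3]"
  have l4: "length [x0,x1,x2,x3] = 4" by simp
  have "i = 0 \<or> i = 1 \<or> i = 2 \<or> i = 3" "j = 0 \<or> j = 1 \<or> j = 2 \<or> j = 3"
    using ij four_cases unfolding l4 by blast+
  then show "E ([x0,x1,x2,x3]!i) ([x0,x1,x2,x3]!j) \<longleftrightarrow>
      (j = Suc i mod length [x0,x1,x2,x3] \<or> i = Suc j mod length [x0,x1,x2,x3])"
    unfolding l4 using e irr n by (elim disjE) simp_all
qed


lemma clique_subset: "clique E K \<Longrightarrow> K' \<subseteq> K \<Longrightarrow> clique E K'"
  unfolding clique_def by blast

theorem theorem3p11:
  fixes V :: "'a set" and E :: "'a \<Rightarrow> 'a \<Rightarrow> bool" and t :: nat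
  assumes "t \<ge> 2"
    and "graph V E"
    and "connected_graph V E"
    and "chordal V E"
    and "\<not> has_induced_KtKt V E t"
  shows "lpt V E \<le> t - 1"
proof -
  interpret cg V E using assms(2,4) by (simp add: cg_def)
  define LP where "LP = {p. longest_path V E p}"
  have FW: "\<forall>S\<in>set ` LP. S \<subseteq> V \<and> conn E S"
  proof
    fix S assume "S \<in> set ` LP"
    then obtain p where p: "longest_path V E p" "S = set p" by (auto simp: LP_def)
    then have pp: "is_path V E p" by (simp add: longest_path_def)
    then show "S \<subseteq> V \<and> conn E S" using p(2) path_conn[OF symA pp] by (simp add: is_path_def)
  qed
  have FT: "\<forall>S\<in>set ` LP. \<forall>T\<in>set ` LP. touch E S T"
  proof (intro ballI)
    fix S T assume "S \<in> set ` LP" "T \<in> set ` LP"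
    then obtain p q where "longest_path V E p" "S = set p" "longest_path V E q" "T = set q"
      by (auto simp: LP_def)
    then show "touch E S T" using longest_intersect[OF assms(3)] unfolding touch_def by blast
  qed
  obtain K0 where K0: "K0 \<subseteq> V" "clique E K0" "\<forall>S\<in>set ` LP. S \<inter> K0 \<noteq> {}"
    using helly[OF subset_refl FW FT] by blast
  define CT where "CT = {K. clique E K \<and> lp_transversal V E K}"
  have "K0 \<in> CT" using K0 by (auto simp: CT_def lp_transversal_def LP_def)
  then have "\<exists>K. K \<in> CT \<and> (\<forall>K'. K' \<in> CT \<longrightarrow> card K \<le> card K')"
    by (rule ex_has_least_nat)
  then obtain K where KCT: "K \<in> CT" and Kmin: "\<And>K'. K' \<in> CT \<Longrightarrow> card K \<le> card K'" by blast
  have KV: "K \<subseteq> V" and Kcl: "clique E K" and Ktr: "lp_transversal V E K"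
    using KCT by (auto simp: CT_def lp_transversal_def)
  have finK: "finite K" using KV finV finite_subset by blast
  show ?thesis
  proof (cases "card K \<le> t - 1")
    case True
    have "lpt V E \<le> card K" unfolding lpt_def by (rule Least_le) (use Ktr in blast)
    then show ?thesis using True by linarith
  next
    case False
    then have tK: "t \<le> card K" by linarith
    have priv: "\<forall>v\<in>K. \<exists>b. b \<in> V \<and> b \<notin> K \<and> E v b \<and> (\<forall>w\<in>K - {v}. \<not> E b w)"
    proof
      fix v assume vK: "v \<in> K"
      have "card (K - {v}) < card K" using card_Diff1_less[OF finK vK] .
      then have "K - {v} \<notin> CT" using Kmin by fastforce
      moreover have "clique E (K - {v})" using clique_subset[OF Kcl] by blast
      ultimately have "\<not> lp_transversal V E (K - {v})" by (simp add: CT_def)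
      then obtain p where p: "longest_path V E p" "set p \<inter> (K - {v}) = {}"
        using KV unfolding lp_transversal_def by blast
      have "set p \<inter> K \<noteq> {}" using Ktr p(1) by (simp add: lp_transversal_def)
      then have vp: "v \<in> set p" using p(2) by blast
      obtain i where i: "i < length p" "p!i = v" using vp by (auto simp: in_set_conv_nth)
      have pp: "is_path V E p" using p(1) by (simp add: longest_path_def)
      have dp: "distinct p" using pp by (simp add: is_path_def)
      have "card (K - {v}) \<ge> 1" using tK assms(1) finK vK by simp
      then have "K - {v} \<noteq> {}"
      proof (intro notI)
        assume c1: "1 \<le> card (K - {v})" and h: "K - {v} = {}"
        have "card (K - {v}) = 0" by (simp only: h card.empty)
        then show False using c1 by simp
      qed
      then obtain w where wK: "w \<in> K - {v}" by blast
      have wV: "w \<in> V" and wp: "w \<notin> set p" and evw: "E v w"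
        using wK KV p(2) Kcl vK by (auto simp: clique_def)
      have si: "Suc i < length p"
      proof (rule ccontr)
        assume "\<not> Suc i < length p"
        then have "i = length p - 1" using i by simp
        then have "last p = v" using i by (metis last_conv_nth list.size(3) not_less0)
        then show False using append_longer[OF p(1) wV wp] evw by simp
      qed
      define b where "b = p!Suc i"
      have bp: "b \<in> set p" using si by (simp add: b_def)
      have bV: "b \<in> V" using bp pp by (auto simp: is_path_def)
      have bv: "b \<noteq> v" using nth_eq_iff_index_eq[OF dp si i(1)] i by (simp add: b_def)
      have bK: "b \<notin> K" using bp p(2) bv by blast
      have evb: "E v b" using pp si i(2) unfolding is_path_def b_def by blast
      have "\<not> E b w'" if w': "w' \<in> K - {v}" for w'
      proof
        assume ebw: "E b w'"
        have w'V: "w' \<in> V" and w'p: "w' \<notin> set p" and evw': "E v w'"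
          using w' KV p(2) Kcl vK by (auto simp: clique_def)
        have "E w' (p!Suc i)" using sym[OF ebw] by (simp add: b_def)
        moreover have "E (p!i) w'" using evw' i by simp
        ultimately show False using insert_longer[OF p(1) si w'V w'p] by blast
      qed
      then show "\<exists>b. b \<in> V \<and> b \<notin> K \<and> E v b \<and> (\<forall>w\<in>K - {v}. \<not> E b w)"
        using bV bK evb by blast
    qed
    then have "\<exists>bf. \<forall>v\<in>K. bf v \<in> V \<and> bf v \<notin> K \<and> E v (bf v) \<and> (\<forall>w\<in>K - {v}. \<not> E (bf v) w)"
      by (rule bchoice)
    then obtain bf where bf: "\<And>v. v \<in> K \<Longrightarrow> bf v \<in> V \<and> bf v \<notin> K \<and> E v (bf v) \<and> (\<forall>w\<in>K - {v}. \<not> E (bf v) w)"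
      by blast
    obtain K' where K': "K' \<subseteq> K" "card K' = t" "finite K'" using obtain_subset_with_card_n[OF tK] by blast
    obtain a where a: "bij_betw a {0..<t} K'" using ex_bij_betw_nat_finite[OF K'(3)] K'(2) by blast
    define b where "b i = bf (a i)" for i
    have aK: "a i \<in> K" if "i < t" for i using a K'(1) that by (auto simp: bij_betw_def)
    have ainj: "inj_on a {..<t}" using a by (simp add: bij_betw_def atLeast0LessThan)
    have aeq: "a i = a j \<longleftrightarrow> i = j" if "i < t" "j < t" for i j
      using ainj that by (auto simp: inj_on_def)
    have bprop: "b i \<in> V" "b i \<notin> K" "E (a i) (b i)" "\<And>w. w \<in> K - {a i} \<Longrightarrow> \<not> E (b i) w"
      if "i < t" for i using bf[OF aK[OF that]] by (auto simp: b_def)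
    have nab: "\<not> E (a i) (b j)" if "i < t" "j < t" "i \<noteq> j" for i j
    proof
      assume "E (a i) (b j)"
      then have "E (b j) (a i)" by (rule sym)
      moreover have "a i \<in> K - {a j}" using aK aeq that by auto
      ultimately show False using bprop(4)[OF that(2)] by blast
    qed
    have binj: "b i = b j \<longleftrightarrow> i = j" if "i < t" "j < t" for i j
    proof
      assume "b i = b j"
      then show "i = j" using nab[of i j] bprop(3)[OF that(1)] that by auto
    qed simp
    have nbb: "\<not> E (b i) (b j)" if ij: "i < t" "j < t" for i j
    proof (cases "i = j")
      case True then show ?thesis using irr by simp
    next
      case False
      show ?thesis
      proof
        assume ebb: "E (b i) (b j)"
        define c where "c = [a i, b i, b j, a j]"
        have aij: "a i \<noteq> a j" using aeq ij False by blast
        have bij: "b i \<noteq> b j" using binj ij False by blast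
        have abK: "a i \<in> K" "a j \<in> K" "b i \<notin> K" "b j \<notin> K" using aK bprop ij by auto
        have "distinct c" using aij bij abK by (auto simp: c_def)
        moreover have "set c \<subseteq> V" using abK KV bprop ij by (auto simp: c_def)
        moreover have "length c \<ge> 4" by (simp add: c_def)
        moreover have "\<forall>i'<length c. \<forall>j'<length c.
            E (c!i') (c!j') \<longleftrightarrow> (j' = Suc i' mod length c \<or> i' = Suc j' mod length c)"
          unfolding c_def
        proof (rule cyc4)
          show "E (a i) (b i)" using bprop(3)[OF ij(1)] .
          show "E (b i) (b j)" by fact
          show "E (b j) (a j)" using sym[OF bprop(3)[OF ij(2)]] .
          show "E (a j) (a i)" using Kcl abK aij[symmetric] unfolding clique_def by blast
          show "E (b i) (a i)" using sym[OF bprop(3)[OF ij(1)]] .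
          show "E (b j) (b i)" using sym[OF ebb] .
          show "E (a j) (b j)" using bprop(3)[OF ij(2)] .
          show "E (a i) (a j)" using Kcl abK aij unfolding clique_def by blast
          show "\<not> E (a i) (a i)" "\<not> E (b i) (b i)" "\<not> E (b j) (b j)" "\<not> E (a j) (a j)" using irr by auto
          show "\<not> E (a i) (b j)" using nab ij False by blast
          show "\<not> E (b i) (a j)" using nab[of j i] ij False sym by blast
          show "\<not> E (b j) (a i)" using nab ij False sym by blast
          show "\<not> E (a j) (b i)" using nab[of j i] ij False by blast
        qed
        ultimately show False using ch unfolding chordal_def by blast
      qed
    qed
    have h1: "inj_on a {..<t}" by fact
    have h2: "inj_on b {..<t}" using binj by (auto simp: inj_on_def)
    have h3: "a ` {..<t} \<inter> b ` {..<t} = {}" using aK bprop by fastforce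
    have h4: "a ` {..<t} \<subseteq> V" using aK KV by auto
    have h5: "b ` {..<t} \<subseteq> V" using bprop by auto
    have h6: "\<forall>i<t. \<forall>j<t. (E (a i) (a j) \<longleftrightarrow> i \<noteq> j) \<and> \<not> E (b i) (b j) \<and> (E (a i) (b j) \<longleftrightarrow> i = j)"
    proof (intro allI impI conjI)
      fix i j assume ij: "i < t" "j < t"
      show "E (a i) (a j) \<longleftrightarrow> i \<noteq> j"
      proof
        assume "E (a i) (a j)" then show "i \<noteq> j" using irr by auto
      next
        assume "i \<noteq> j"
        then have "a i \<noteq> a j" using aeq ij by blast
        then show "E (a i) (a j)" using Kcl aK ij unfolding clique_def by blast
      qed
      show "\<not> E (b i) (b j)" using nbb ij .
      show "E (a i) (b j) \<longleftrightarrow> i = j"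
      proof
        assume "E (a i) (b j)" then show "i = j" using nab ij by blast
      next
        assume "i = j" then show "E (a i) (b j)" using bprop(3) ij by simp
      qed
    qed
    have "has_induced_KtKt V E t"
      unfolding has_induced_KtKt_def using h1 h2 h3 h4 h5 h6 by blast
    then show ?thesis using assms(5) by blast
  qed
qed

end
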